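(* Let $\mathcal{U}$ be the set of all non-trivial parts that appear in some linear clobber game starting from a single part in $\mathcal{A}=\{(\mathtt{ox})^n : n\ge 1\}$. Let $\mathcal{O}=\{\mathtt{o}(\mathtt{xo})^t : t\ge 0\}$, $o\mathcal{A}=\{\mathtt{o}(\mathtt{ox})^t : t\ge 0\}$, $o\mathcal{O}=\{\mathtt{oo}(\mathtt{xo})^t : t\ge 0\}$, $o\mathcal{O}o=\{\mathtt{oo}(\mathtt{xo})^t\mathtt{o} : t\ge 0\}$ and $o\mathcal{A}x=\{\mathtt{o}(\mathtt{ox})^n\mathtt{x} : n\ge 1\}$. Then $\mathcal{U}$ equals the set of non-trivial parts belonging to $$\mathcal{A}\cup\mathcal{O}\cup o\mathcal{A}\cup o\mathcal{O}\cup o\mathcal{O}o\cup o\mathcal{A}x\cup(-\mathcal{O})\cup(-o\mathcal{A})\cup(-o\mathcal{O})\cup(-o\mathcal{O}o).$$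
   Context: Linear clobber is a two-player game (Left owns black stones $\mathtt{x}$, Right owns white stones $\mathtt{o}$) played on a path of cells, each cell empty or holding one stone. On a turn, a player chooses one of their stones that is in a cell adjacent (consecutive on the path) to a cell holding an opponent stone, removes the opponent stone and moves their own stone into that cell, leaving its original cell empty. Players alternate; a player who cannot move loses. A part is a maximal block of consecutive non-empty cells, written as a word over $\{\mathtt{o},\mathtt{x}\}$; a position is the disjoint sum of its parts. A part and its left-right reversal are identified (e.g. $\mathtt{xo}$ is identified with $\mathtt{ox}$). Words are written by concatenation, with exponents denoting repetition. A part is trivial if no two adjacent stones have different colors. For a part $p$, $-p$ is obtained by swapping the colors $\mathtt{o}\leftrightarrow\mathtt{x}$ of every stone, and for a set $X$ of parts, $-X=\{-p : p\in X\}$. A part "appears in some game starting from" a part $q$ if it is a part of some position reachable from the position $q$ by a sequence of legal moves (by either player, in any order). *)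

theory Defs
  imports Main
begin

text \<open>Stones: Bx is Left's black stone x, Wo is Right's white stone o.\<close>
datatype stone = Bx | Wo

fun opp :: "stone \<Rightarrow> stone" where
  "opp Bx = Wo" | "opp Wo = Bx"

type_synonym board = "stone option list"

definition clobber_move :: "board \<Rightarrow> board \<Rightarrow> bool" where
  "clobber_move b b' \<longleftrightarrow>
     (\<exists>i j c. i < length b \<and> j < length b \<and> (j = Suc i \<or> i = Suc j) \<and>
        b ! i = Some c \<and> b ! j = Some (opp c) \<and>
        b' = (b[j := Some c])[i := None])"

definition reachable :: "board \<Rightarrow> board \<Rightarrow> bool" where
  "reachable = clobber_move\<^sup>*\<^sup>*"

definition is_part :: "stone list \<Rightarrow> board \<Rightarrow> bool" where
  "is_part p b \<longleftrightarrow> p \<noteq> [] \<and>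
     (\<exists>k. k + length p \<le> length b \<and> take (length p) (drop k b) = map Some p \<and>
          (k = 0 \<or> b ! (k - 1) = None) \<and>
          (k + length p = length b \<or> b ! (k + length p) = None))"

definition board_of :: "stone list \<Rightarrow> board" where
  "board_of w = map Some w"

definition nontrivial :: "stone list \<Rightarrow> bool" where
  "nontrivial p \<longleftrightarrow> (\<exists>i. Suc i < length p \<and> p ! i \<noteq> p ! Suc i)"

definition neg_part :: "stone list \<Rightarrow> stone list" where
  "neg_part p = map opp p"

definition rep :: "nat \<Rightarrow> stone list \<Rightarrow> stone list" where
  "rep n w = concat (replicate n w)"

definition famA :: "stone list set" where
  "famA = {rep n [Wo,Bx] | n. n \<ge> 1}"
definition famO :: "stone list set" where
  "famO = {[Wo] @ rep t [Bx,Wo] | t. True}"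
definition fam_oA :: "stone list set" where
  "fam_oA = {[Wo] @ rep t [Wo,Bx] | t. True}"
definition fam_oO :: "stone list set" where
  "fam_oO = {[Wo,Wo] @ rep t [Bx,Wo] | t. True}"
definition fam_oOo :: "stone list set" where
  "fam_oOo = {[Wo,Wo] @ rep t [Bx,Wo] @ [Wo] | t. True}"
definition fam_oAx :: "stone list set" where
  "fam_oAx = {[Wo] @ rep n [Wo,Bx] @ [Bx] | n. n \<ge> 1}"

definition famAll :: "stone list set" where
  "famAll = famA \<union> famO \<union> fam_oA \<union> fam_oO \<union> fam_oOo \<union> fam_oAx \<union>
            neg_part ` famO \<union> neg_part ` fam_oA \<union> neg_part ` fam_oO \<union> neg_part ` fam_oOo"

text \<open>Parts are identified with their reversals: w appears (up to reversal)
  in some game starting from a single part of A.\<close>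
definition appears_from_A :: "stone list \<Rightarrow> bool" where
  "appears_from_A w \<longleftrightarrow> (\<exists>q b p. q \<in> famA \<and> reachable (board_of q) b \<and>
       is_part p b \<and> (p = w \<or> p = rev w))"

end

theory Submission
  imports Defs
begin


lemma opp_opp[simp]: "opp (opp s) = s" by (cases s) auto
lemma opp_neq[simp]: "opp s \<noteq> s" "s \<noteq> opp s" by (cases s, auto)+
lemma neq_opp: "a \<noteq> b \<Longrightarrow> b = opp a" by (cases a; cases b) auto

lemma rep_0[simp]: "rep 0 l = []" by (simp add: rep_def)
lemma rep_Suc: "rep (Suc n) l = l @ rep n l" by (simp add: rep_def)
lemma rep_Suc2: "rep (Suc n) l = rep n l @ l"
  by (induction n) (simp_all add: rep_Suc)
lemma rep_shift: "rep n [a,b] @ [a] = a # rep n [b,a]"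
  by (induction n) (simp_all add: rep_Suc)
lemma rep_rev: "rev (rep n [a,b]) = rep n [b,a]"
  by (induction n) (simp_all add: rep_Suc, metis rep_Suc rep_Suc2 append_Cons append_Nil)
lemma rep_map: "map f (rep n l) = rep n (map f l)"
  by (simp add: rep_def map_concat)
lemma rep_len: "length (rep n l) = n * length l"
  by (induction n) (simp_all add: rep_Suc)

fun alt :: "stone list \<Rightarrow> bool" where
  "alt (a # b # xs) = (a \<noteq> b \<and> alt (b # xs))"
| "alt _ = True"

lemma alt_Cons: "alt (a # m) = (alt m \<and> (m = [] \<or> a \<noteq> hd m))"
  by (cases m) auto
lemma alt_append1: "alt (xs @ ys) \<Longrightarrow> alt xs"
  by (induction xs rule: alt.induct) auto
lemma alt_append2: "alt (xs @ ys) \<Longrightarrow> alt ys"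
  by (induction xs rule: alt.induct) (auto simp: alt_Cons)
lemma alt_snoc: "alt (m @ [b]) = (alt m \<and> (m = [] \<or> last m \<noteq> b))"
  by (induction m rule: alt.induct) auto
lemma alt_rev: "alt (rev m) = alt m"
  by (induction m) (auto simp: alt_snoc alt_Cons last_rev)

lemma alt_rep: "a \<noteq> b \<Longrightarrow> alt (rep n [a,b]) \<and> alt (b # rep n [a,b])"
  by (induction n) (auto simp: rep_Suc)

lemma alt_form: "alt w \<Longrightarrow> w \<noteq> [] \<Longrightarrow>
  (\<exists>n. w = rep n [hd w, opp (hd w)] \<or> w = rep n [hd w, opp (hd w)] @ [hd w])"
proof (induction w rule: length_induct)
  case (1 w)
  then obtain s w1 where w: "w = s # w1" by (cases w) auto
  show ?case
  proof (cases w1)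
    case Nil then show ?thesis using w by (intro exI[of _ 0]) simp
  next
    case (Cons s' w2)
    have s': "s' = opp s" using 1(2) w Cons neq_opp by auto
    show ?thesis
    proof (cases w2)
      case Nil then show ?thesis using w Cons s' by (intro exI[of _ 1]) (simp add: rep_Suc)
    next
      case (Cons s'' w3)
      have "s'' = s" using 1(2) w \<open>w1 = s' # w2\<close> Cons s' neq_opp by fastforce
      have "alt w2" using 1(2) w \<open>w1 = s' # w2\<close> by (simp add: alt_Cons)
      moreover have "length w2 < length w" "w2 \<noteq> []" "hd w2 = s"
        using w \<open>w1 = s' # w2\<close> Cons \<open>s'' = s\<close> by auto
      ultimately obtain n where "w2 = rep n [s, opp s] \<or> w2 = rep n [s, opp s] @ [s]"
        using 1(1) by metis
      then show ?thesis using w \<open>w1 = s' # w2\<close> s'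
        by (intro exI[of _ "Suc n"]) (auto simp: rep_Suc)
    qed
  qed
qed

definition G :: "stone list \<Rightarrow> bool" where
  "G w = alt (tl (butlast w))"

lemma G_rev: "G (rev w) = G w"
proof -
  have "tl (butlast (rev w)) = rev (tl (butlast w))"
    by (cases w rule: rev_cases) (auto simp: butlast_tl)
  then show ?thesis by (simp add: G_def alt_rev)
qed

lemma G_prefix: "G (u @ x) \<Longrightarrow> G u"
proof -
  assume a: "G (u @ x)"
  show "G u"
  proof (cases "x = [] \<or> u = []")
    case True then show ?thesis using a by (auto simp: G_def)
  next
    case False
    then have "tl (butlast (u @ x)) = tl u @ butlast x" by (simp add: butlast_append)
    then have "alt (tl u)" using a alt_append1 by (auto simp: G_def)
    then show ?thesis unfolding G_def butlast_tl[symmetric]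
      by (metis alt_append1 append_butlast_last_id butlast.simps(1))
  qed
qed

lemma G_suffix: "G (x @ v) \<Longrightarrow> G v"
  by (metis G_prefix G_rev rev_append)


lemma rep_shift2: "rep n [a,b] @ a # xs = a # rep n [b,a] @ xs"
  using rep_shift[of n a b] by (metis append_Cons append_Nil append_assoc)

lemma nontriv_simps[simp]: "nontrivial [] = False" "nontrivial [x] = False"
  "nontrivial (x # y # xs) = (x \<noteq> y \<or> nontrivial (y # xs))"
  unfolding nontrivial_def
  apply simp apply simp
  apply (rule iffI)
   apply (metis Suc_less_eq length_Cons less_Suc_eq_0_disj nth_Cons_0 nth_Cons_Suc)
  by (metis Suc_less_eq length_Cons nth_Cons_0 nth_Cons_Suc zero_less_Suc)

lemma mA: "0 < n \<Longrightarrow> rep n [Wo,Bx] \<in> famAll"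
  unfolding famAll_def famA_def by auto
lemma mO: "Wo # rep t [Bx,Wo] \<in> famAll"
  unfolding famAll_def famO_def by auto
lemma moA: "Wo # rep t [Wo,Bx] \<in> famAll"
  unfolding famAll_def fam_oA_def by auto
lemma moO: "Wo # Wo # rep t [Bx,Wo] \<in> famAll"
  unfolding famAll_def fam_oO_def by auto
lemma moOo: "Wo # Wo # rep t [Bx,Wo] @ [Wo] \<in> famAll"
  unfolding famAll_def fam_oOo_def by auto
lemma moAx: "0 < n \<Longrightarrow> Wo # rep n [Wo,Bx] @ [Bx] \<in> famAll"
  unfolding famAll_def fam_oAx_def by auto
lemma mnO: "Bx # rep t [Wo,Bx] \<in> famAll"
proof -
  have "Bx # rep t [Wo,Bx] \<in> neg_part ` famO"
    unfolding neg_part_def famO_def by (rule image_eqI[of _ _ "Wo # rep t [Bx,Wo]"]) (auto simp: rep_map)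
  then show ?thesis unfolding famAll_def by blast
qed
lemma mnoA: "Bx # rep t [Bx,Wo] \<in> famAll"
proof -
  have "Bx # rep t [Bx,Wo] \<in> neg_part ` fam_oA"
    unfolding neg_part_def fam_oA_def by (rule image_eqI[of _ _ "Wo # rep t [Wo,Bx]"]) (auto simp: rep_map)
  then show ?thesis unfolding famAll_def by blast
qed
lemma mnoO: "Bx # Bx # rep t [Wo,Bx] \<in> famAll"
proof -
  have "Bx # Bx # rep t [Wo,Bx] \<in> neg_part ` fam_oO"
    unfolding neg_part_def fam_oO_def by (rule image_eqI[of _ _ "Wo # Wo # rep t [Bx,Wo]"]) (auto simp: rep_map)
  then show ?thesis unfolding famAll_def by blast
qed
lemma mnoOo: "Bx # Bx # rep t [Wo,Bx] @ [Bx] \<in> famAll"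
proof -
  have "Bx # Bx # rep t [Wo,Bx] @ [Bx] \<in> neg_part ` fam_oOo"
    unfolding neg_part_def fam_oOo_def by (rule image_eqI[of _ _ "Wo # Wo # rep t [Bx,Wo] @ [Wo]"]) (auto simp: rep_map)
  then show ?thesis unfolding famAll_def by blast
qed

lemma mA2: "Wo # Bx # rep n [Wo,Bx] \<in> famAll"
  using mA[of "Suc n"] by (simp add: rep_Suc)
lemma rep_fold: "a # b # rep n [a,b] = rep (Suc n) [a,b]" by (simp add: rep_Suc)
lemma rep_fold2: "a # b # rep n [a,b] @ xs = rep (Suc n) [a,b] @ xs" by (simp add: rep_Suc)
lemma small: "[Wo,Wo,Bx] \<in> famAll" "[Bx,Bx,Wo] \<in> famAll" "[Wo,Bx,Wo] \<in> famAll"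
  "[Bx,Wo,Bx] \<in> famAll" "[Wo,Bx] \<in> famAll"
  using moA[of 1] mnoA[of 1] mO[of 1] mnO[of 1] mA[of 1] by (simp_all add: rep_Suc)
lemmas memfam = small mA2 mA mO mnO moA mnoA moO mnoO moOo mnoOo moAx


lemmas fsimps = memfam rep_shift rep_shift2 rep_rev rep_fold rep_fold2

lemma G_fam: assumes "nontrivial w" "G w" shows "w \<in> famAll \<or> rev w \<in> famAll"
proof -
  obtain a m b where w: "w = a # m @ [b]"
    using assms(1) by (metis append_butlast_last_id list.exhaust nontriv_simps(1,2) butlast.simps(2) last.simps list.distinct(1))
  have am: "alt m" using assms(2) w by (simp add: G_def)
  show ?thesis
  proof (cases "m = []")
    case True
    then show ?thesis using assms(1) w
      by (cases a; cases b) (simp_all add: fsimps)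
  next
    case False
    define s where "s = hd m"
    obtain n where m: "m = rep n [s, opp s] \<or> m = rep n [s, opp s] @ [s]"
      using alt_form[OF am False] s_def by blast
    show ?thesis
    proof (cases "m = rep n [s, opp s]")
      case True
      have "n > 0" using True False by (cases n) auto
      then show ?thesis using assms(1) w True
        by (cases a; cases b; cases s) (simp_all add: fsimps)
    next
      case F2: False
      then have m2: "m = rep n [s, opp s] @ [s]" using m by auto
      show ?thesis using assms(1) w m2
        by (cases a; cases b; cases s; cases n) (simp_all add: fsimps)
    qed
  qed
qed



fun blocks :: "board \<Rightarrow> stone list list" where
  "blocks [] = [[]]"
| "blocks (None # b) = [] # blocks b"
| "blocks (Some s # b) = (s # hd (blocks b)) # tl (blocks b)"

lemma blocks_ne[simp]: "blocks b \<noteq> []"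
  by (induction b rule: blocks.induct) auto

lemma blocks_map: "blocks (map Some p @ b) = (p @ hd (blocks b)) # tl (blocks b)"
  by (induction p) auto

lemma blocks_None: "blocks (x @ None # y) = blocks x @ blocks y"
  by (induction x rule: blocks.induct) auto

definition D :: "stone list \<Rightarrow> board \<Rightarrow> bool" where
  "D p b \<longleftrightarrow> (\<exists>l r. b = l @ map Some p @ r \<and> (l = [] \<or> last l = None) \<and> (r = [] \<or> hd r = None))"

lemma D_blocks: assumes "D p b" shows "p \<in> set (blocks b)"
proof -
  obtain l r where b: "b = l @ map Some p @ r" and l: "l = [] \<or> last l = None" and r: "r = [] \<or> hd r = None"
    using assms D_def by blast
  have "p \<in> set (blocks (map Some p @ r))"
    using r blocks_map[of p "[]"] by (cases r) (auto simp: blocks_map)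
  then show ?thesis using l b
    by (cases l rule: rev_cases) (auto simp: blocks_None)
qed

lemma is_part_D: "is_part p b \<Longrightarrow> D p b"
proof -
  assume "is_part p b"
  then obtain k where k: "k + length p \<le> length b" "take (length p) (drop k b) = map Some p"
    "k = 0 \<or> b ! (k - 1) = None" "k + length p = length b \<or> b ! (k + length p) = None"
    unfolding is_part_def by blast
  define l where "l = take k b"
  define r where "r = drop (k + length p) b"
  have "b = l @ take (length p) (drop k b) @ r"
    unfolding l_def r_def by (metis append_take_drop_id drop_drop add.commute)
  then have b: "b = l @ map Some p @ r" using k(2) by simp
  have "l = [] \<or> last l = None"
  proof (cases k)
    case (Suc k')
    then have "last (take k b) = b ! k'" using k(1)
      by (simp add: last_conv_nth take_Suc_conv_app_nth)
    then show ?thesis using k(3) Suc by (simp add: l_def)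
  qed (simp add: l_def)
  moreover have "r = [] \<or> hd r = None" using k(1,4) unfolding r_def
    by (cases "k + length p < length b") (auto simp: hd_drop_conv_nth)
  ultimately show ?thesis using b D_def by blast
qed

lemma D_is_part: "D p b \<Longrightarrow> p \<noteq> [] \<Longrightarrow> is_part p b"
proof -
  assume "D p b" "p \<noteq> []"
  then obtain l r where b: "b = l @ map Some p @ r" and l: "l = [] \<or> last l = None" and r: "r = [] \<or> hd r = None"
    using D_def by blast
  show ?thesis unfolding is_part_def
  proof (intro conjI exI[of _ "length l"])
    show "p \<noteq> []" by fact
    show "length l + length p \<le> length b" using b by simp
    show "take (length p) (drop (length l) b) = map Some p" using b by simp
    show "length l = 0 \<or> b ! (length l - 1) = None" using l b
      by (cases l rule: rev_cases) (auto simp: nth_append)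
    show "length l + length p = length b \<or> b ! (length l + length p) = None" using r b
      by (cases r) (auto simp: nth_append)
  qed
qed


lemma G_Cons_any: "G (x # v) = G (y # v)"
  by (cases v rule: rev_cases) (auto simp: G_def)
lemma G_snoc_any: "G (u @ [x]) = G (u @ [y])"
  by (cases u) (auto simp: G_def)

lemma move_form: assumes "clobber_move b b'"
  shows "\<exists>L R c. (b = L @ [Some c, Some (opp c)] @ R \<and> b' = L @ [None, Some c] @ R) \<or>
                (b = L @ [Some (opp c), Some c] @ R \<and> b' = L @ [Some c, None] @ R)"
proof -
  obtain i j c where ij: "i < length b" "j < length b" "j = Suc i \<or> i = Suc j"
    "b ! i = Some c" "b ! j = Some (opp c)" "b' = (b[j := Some c])[i := None]"
    using assms clobber_move_def by blast
  have dec: "\<And>k. Suc k < length b \<Longrightarrow> b = take k b @ [b ! k, b ! Suc k] @ drop (Suc (Suc k)) b"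
    by (metis Cons_nth_drop_Suc Suc_lessD append_Cons append_Nil append_take_drop_id)
  show ?thesis
  proof (cases "j = Suc i")
    case True
    obtain L R where LR: "b = L @ [Some c, Some (opp c)] @ R" "length L = i"
      using dec[of i] ij True by (metis length_take min_absorb2 less_imp_le_nat)
    have "b' = L @ [None, Some c] @ R"
      using ij(6) True LR by (simp add: list_update_append)
    then show ?thesis using LR by blast
  next
    case False
    then have ij': "i = Suc j" using ij(3) by simp
    obtain L R where LR: "b = L @ [Some (opp c), Some c] @ R" "length L = j"
      using dec[of j] ij ij' by (metis length_take min_absorb2 less_imp_le_nat)
    have "b' = L @ [Some c, None] @ R"
      using ij(6) ij' LR by (simp add: list_update_append)
    then show ?thesis using LR by blast
  qed
qed

lemma split_left: "\<exists>L0 u. L = L0 @ map Some u \<and> (L0 = [] \<or> last L0 = None)"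
proof (induction L rule: rev_induct)
  case Nil then show ?case by auto
next
  case (snoc x xs)
  then obtain L0 u where "xs = L0 @ map Some u" "L0 = [] \<or> last L0 = None" by blast
  then show ?case
    by (cases x) (rule exI[of _ "xs @ [x]"], rule exI[of _ "[]"], simp,
                  rule exI[of _ L0], rule exI[of _ "u @ [the x]"], simp)
qed

lemma split_right: "\<exists>R0 v. R = map Some v @ R0 \<and> (R0 = [] \<or> hd R0 = None)"
proof (induction R)
  case Nil then show ?case by auto
next
  case (Cons x xs)
  then obtain R0 v where "xs = map Some v @ R0" "R0 = [] \<or> hd R0 = None" by blast
  then show ?case
    by (cases x) (rule exI[of _ "x # xs"], rule exI[of _ "[]"], simp,
                  rule exI[of _ R0], rule exI[of _ "the x # v"], simp)
qed

lemma ctx_blocks: assumes "L0 = [] \<or> last L0 = None" "R0 = [] \<or> hd R0 = None"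
  shows "\<exists>A B. (\<forall>q. blocks (L0 @ map Some q @ R0) = A @ [q] @ B) \<and>
     (\<forall>q1 q2. blocks (L0 @ map Some q1 @ None # map Some q2 @ R0) = A @ [q1, q2] @ B)"
proof -
  have "\<exists>B. \<forall>q. blocks (map Some q @ R0) = q # B"
  proof (cases R0)
    case Nil then show ?thesis using blocks_map[of _ "[]"] by simp
  next
    case (Cons y R1) then show ?thesis using assms(2) by (simp add: blocks_map)
  qed
  then obtain B where B: "\<And>q. blocks (map Some q @ R0) = q # B" by blast
  have B2: "\<And>q1 q2. blocks (map Some q1 @ None # map Some q2 @ R0) = q1 # q2 # B"
    using B blocks_map by simp
  show ?thesis
  proof (cases L0 rule: rev_cases)
    case Nil then show ?thesis using B B2 by (intro exI[of _ "[]"] exI[of _ B]) simp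
  next
    case (snoc L1 y)
    then have "y = None" using assms(1) by simp
    then show ?thesis using B B2 snoc
      by (intro exI[of _ "blocks L1"] exI[of _ B]) (simp add: blocks_None)
  qed
qed

definition Inv :: "board \<Rightarrow> bool" where
  "Inv b \<longleftrightarrow> (\<forall>q\<in>set (blocks b). G q)"

lemma Inv_step: assumes "clobber_move b b'" "Inv b" shows "Inv b'"
proof -
  obtain L R c where m: "(b = L @ [Some c, Some (opp c)] @ R \<and> b' = L @ [None, Some c] @ R) \<or>
                (b = L @ [Some (opp c), Some c] @ R \<and> b' = L @ [Some c, None] @ R)"
    using move_form[OF assms(1)] by blast
  obtain L0 u where L: "L = L0 @ map Some u" "L0 = [] \<or> last L0 = None" using split_left by blast
  obtain R0 v where R: "R = map Some v @ R0" "R0 = [] \<or> hd R0 = None" using split_right by blast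
  obtain A B where AB: "\<And>q. blocks (L0 @ map Some q @ R0) = A @ [q] @ B"
     "\<And>q1 q2. blocks (L0 @ map Some q1 @ None # map Some q2 @ R0) = A @ [q1, q2] @ B"
    using ctx_blocks[OF L(2) R(2)] by blast
  show ?thesis
  proof (cases "b = L @ [Some c, Some (opp c)] @ R \<and> b' = L @ [None, Some c] @ R")
    case True
    have "b = L0 @ map Some (u @ [c, opp c] @ v) @ R0" using True L R by simp
    then have bb: "blocks b = A @ [u @ [c, opp c] @ v] @ B" using AB(1)[of "u @ [c, opp c] @ v"] by simp
    have "b' = L0 @ map Some u @ None # map Some (c # v) @ R0" using True L R by simp
    then have bb': "blocks b' = A @ [u, c # v] @ B" using AB(2)[of u "c # v"] by simp
    have g: "G (u @ [c, opp c] @ v)" using assms(2) bb by (simp add: Inv_def)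
    have "G u" using g G_prefix by blast
    moreover have "G (c # v)" using g G_suffix[of "u @ [c]" "opp c # v"] G_Cons_any[of c v "opp c"] by simp
    ultimately show ?thesis using assms(2) bb bb' by (auto simp: Inv_def)
  next
    case False
    then have F: "b = L @ [Some (opp c), Some c] @ R \<and> b' = L @ [Some c, None] @ R" using m by blast
    have "b = L0 @ map Some (u @ [opp c, c] @ v) @ R0" using F L R by simp
    then have bb: "blocks b = A @ [u @ [opp c, c] @ v] @ B" using AB(1)[of "u @ [opp c, c] @ v"] by simp
    have "b' = L0 @ map Some (u @ [c]) @ None # map Some v @ R0" using F L R by simp
    then have bb': "blocks b' = A @ [u @ [c], v] @ B" using AB(2)[of "u @ [c]" v] by simp
    have g: "G (u @ [opp c, c] @ v)" using assms(2) bb by (simp add: Inv_def)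
    have "G (u @ [c])" using g G_prefix[of "u @ [opp c]" "c # v"] G_snoc_any by (metis append.assoc append_Cons append_Nil)
    moreover have "G v" using g G_suffix by blast
    ultimately show ?thesis using assms(2) bb bb' by (auto simp: Inv_def)
  qed
qed

lemma Inv_reach: "reachable b b' \<Longrightarrow> Inv b \<Longrightarrow> Inv b'"
  unfolding reachable_def by (induction rule: rtranclp_induct) (auto intro: Inv_step)



lemma mvR: "clobber_move (L @ [Some c, Some (opp c)] @ R) (L @ [None, Some c] @ R)"
  unfolding clobber_move_def
  by (rule exI[of _ "length L"], rule exI[of _ "Suc (length L)"], rule exI[of _ c])
     (simp add: nth_append list_update_append)

lemma mvL: "clobber_move (L @ [Some (opp c), Some c] @ R) (L @ [Some c, None] @ R)"
  unfolding clobber_move_def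
  by (rule exI[of _ "Suc (length L)"], rule exI[of _ "length L"], rule exI[of _ c])
     (simp add: nth_append list_update_append)

lemma reach1: "clobber_move a b \<Longrightarrow> reachable a b"
  unfolding reachable_def by auto
lemma reach2: "clobber_move a b \<Longrightarrow> clobber_move b c \<Longrightarrow> reachable a c"
  unfolding reachable_def by (meson converse_rtranclp_into_rtranclp r_into_rtranclp)

lemma appear_intro:
  assumes "n \<ge> 1" "reachable (map Some (rep n [Wo,Bx])) (L @ map Some p @ R)"
    "L = [] \<or> last L = None" "R = [] \<or> hd R = None" "p \<noteq> []" "p = w \<or> p = rev w"
  shows "appears_from_A w"
proof -
  have "rep n [Wo,Bx] \<in> famA" using assms(1) famA_def by auto
  moreover have "is_part p (L @ map Some p @ R)"
    using D_is_part assms(3-5) D_def by blast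
  ultimately show ?thesis using assms(2,6) unfolding appears_from_A_def board_of_def by blast
qed

lemma appears_rev: "appears_from_A (rev w) = appears_from_A w"
  unfolding appears_from_A_def by auto

lemma apA: "n \<ge> 1 \<Longrightarrow> appears_from_A (rep n [Wo,Bx])"
  by (rule appear_intro[of n "[]" _ "[]"]) (auto simp: reachable_def dest: arg_cong[of _ _ length] simp: rep_len)

lemma rR: "b0 = L @ [Some c, Some (opp c)] @ R \<Longrightarrow> L @ [None, Some c] @ R = b1 \<Longrightarrow> clobber_move b0 b1"
  using mvR by blast
lemma rL: "b0 = L @ [Some (opp c), Some c] @ R \<Longrightarrow> L @ [Some c, None] @ R = b1 \<Longrightarrow> clobber_move b0 b1"
  using mvL by blast

lemma apO: "appears_from_A (Wo # rep t [Bx,Wo])"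
proof (rule appear_intro[of "Suc (Suc t)" "[]" "rep t [Wo,Bx] @ [Wo]" "[None, Some Bx, Some Bx]"])
  show "reachable (map Some (rep (Suc (Suc t)) [Wo, Bx])) ([] @ map Some (rep t [Wo, Bx] @ [Wo]) @ [None, Some Bx, Some Bx])"
    by (rule reach1, rule rR[of _ "map Some (rep t [Wo,Bx] @ [Wo])" Bx "[Some Bx]"]) (simp_all add: rep_Suc2)
qed (simp_all add: rep_shift)

lemma apnO: "appears_from_A (Bx # rep t [Wo,Bx])"
proof (rule appear_intro[of "Suc (Suc t)" "[Some Wo, Some Wo, None]" "Bx # rep t [Wo,Bx]" "[]"])
  show "reachable (map Some (rep (Suc (Suc t)) [Wo, Bx])) ([Some Wo, Some Wo, None] @ map Some (Bx # rep t [Wo,Bx]) @ [])"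
    by (rule reach1, rule rL[of _ "[Some Wo]" Wo "Some Bx # map Some (rep t [Wo,Bx])"]) (simp_all add: rep_Suc)
qed simp_all

lemma apoA: "appears_from_A (Wo # rep t [Wo,Bx])"
proof (rule appear_intro[of "Suc t" "[None]" "Wo # rep t [Wo,Bx]" "[]"])
  show "reachable (map Some (rep (Suc t) [Wo, Bx])) ([None] @ map Some (Wo # rep t [Wo,Bx]) @ [])"
    by (rule reach1, rule rR[of _ "[]" Wo "map Some (rep t [Wo,Bx])"]) (simp_all add: rep_Suc)
qed simp_all

lemma apnoA: "appears_from_A (Bx # rep t [Bx,Wo])"
proof (rule appear_intro[of "Suc t" "[]" "rep t [Wo,Bx] @ [Bx]" "[None]"])
  show "reachable (map Some (rep (Suc t) [Wo, Bx])) ([] @ map Some (rep t [Wo,Bx] @ [Bx]) @ [None])"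
    by (rule reach1, rule rL[of _ "map Some (rep t [Wo,Bx])" Bx "[]"]) (simp_all add: rep_Suc2)
qed (simp_all add: rep_rev)

lemma rep_SS: "rep (Suc (Suc n)) l = l @ rep n l @ l"
  using rep_Suc[of "Suc n" l] rep_Suc2[of n l] by simp

lemma apoO: "appears_from_A (Wo # Wo # rep t [Bx,Wo])"
proof (rule appear_intro[of "Suc (Suc t)" "[]" "rep t [Wo,Bx] @ [Wo,Wo]" "[None, Some Bx]"])
  show "reachable (map Some (rep (Suc (Suc t)) [Wo, Bx])) ([] @ map Some (rep t [Wo,Bx] @ [Wo,Wo]) @ [None, Some Bx])"
    by (rule reach1, rule rL[of _ "map Some (rep t [Wo,Bx] @ [Wo])" Wo "[Some Bx]"]) (simp_all add: rep_Suc2)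
qed (simp_all add: rep_rev)

lemma apnoO: "appears_from_A (Bx # Bx # rep t [Wo,Bx])"
proof (rule appear_intro[of "Suc (Suc t)" "[Some Wo, None]" "Bx # Bx # rep t [Wo,Bx]" "[]"])
  show "reachable (map Some (rep (Suc (Suc t)) [Wo, Bx])) ([Some Wo, None] @ map Some (Bx # Bx # rep t [Wo,Bx]) @ [])"
    by (rule reach1, rule rR[of _ "[Some Wo]" Bx "Some Bx # map Some (rep t [Wo,Bx])"]) (simp_all add: rep_Suc)
qed simp_all

lemma apoOo: "appears_from_A (Wo # Wo # rep t [Bx,Wo] @ [Wo])"
proof (rule appear_intro[of "Suc (Suc (Suc t))" "[None]" "Wo # Wo # rep t [Bx,Wo] @ [Wo]" "[None, Some Bx]"])
  have e: "rep (Suc (Suc (Suc t))) [Wo,Bx] = [Wo,Bx,Wo] @ rep t [Bx,Wo] @ [Bx,Wo,Bx]"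
    by (simp add: rep_SS rep_Suc2 rep_shift2)
  show "reachable (map Some (rep (Suc (Suc (Suc t))) [Wo, Bx])) ([None] @ map Some (Wo # Wo # rep t [Bx,Wo] @ [Wo]) @ [None, Some Bx])"
    by (rule reach2[of _ "[None, Some Wo, Some Wo] @ map Some (rep t [Bx,Wo]) @ [Some Bx, Some Wo, Some Bx]"],
        rule rR[of _ "[]" Wo "Some Wo # map Some (rep t [Bx,Wo]) @ [Some Bx, Some Wo, Some Bx]"],
        simp add: e, simp,
        rule rL[of _ "[None, Some Wo, Some Wo] @ map Some (rep t [Bx,Wo])" Wo "[Some Bx]"]) simp_all
qed simp_all

lemma apnoOo: "appears_from_A (Bx # Bx # rep t [Wo,Bx] @ [Bx])"
proof (rule appear_intro[of "Suc (Suc (Suc t))" "[Some Wo, None]" "Bx # Bx # rep t [Wo,Bx] @ [Bx]" "[None]"])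
  have e: "rep (Suc (Suc (Suc t))) [Wo,Bx] = [Wo,Bx,Wo,Bx] @ rep t [Wo,Bx] @ [Wo,Bx]"
    using rep_SS[of "Suc t" "[Wo,Bx]"] rep_Suc[of t "[Wo,Bx]"] by simp
  show "reachable (map Some (rep (Suc (Suc (Suc t))) [Wo, Bx])) ([Some Wo, None] @ map Some (Bx # Bx # rep t [Wo,Bx] @ [Bx]) @ [None])"
    by (rule reach2[of _ "[Some Wo, None, Some Bx, Some Bx] @ map Some (rep t [Wo,Bx]) @ [Some Wo, Some Bx]"],
        rule rR[of _ "[Some Wo]" Bx "Some Bx # map Some (rep t [Wo,Bx]) @ [Some Wo, Some Bx]"],
        simp add: e, simp,
        rule rL[of _ "[Some Wo, None, Some Bx, Some Bx] @ map Some (rep t [Wo,Bx])" Bx "[]"]) simp_all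
qed simp_all

lemma apoAx: "appears_from_A (Wo # rep n [Wo,Bx] @ [Bx])"
proof (rule appear_intro[of "Suc (Suc n)" "[None]" "Wo # rep n [Wo,Bx] @ [Bx]" "[None]"])
  show "reachable (map Some (rep (Suc (Suc n)) [Wo, Bx])) ([None] @ map Some (Wo # rep n [Wo,Bx] @ [Bx]) @ [None])"
    by (rule reach2[of _ "[None, Some Wo] @ map Some (rep n [Wo,Bx]) @ [Some Wo, Some Bx]"],
        rule rR[of _ "[]" Wo "map Some (rep n [Wo,Bx]) @ [Some Wo, Some Bx]"],
        simp add: rep_SS, simp,
        rule rL[of _ "[None, Some Wo] @ map Some (rep n [Wo,Bx])" Bx "[]"]) simp_all
qed simp_all

lemma alt_G: "alt q \<Longrightarrow> G q"
  unfolding G_def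
proof -
  assume a: "alt q"
  have "alt (butlast q)"
    using a by (cases q rule: rev_cases) (auto dest: alt_append1)
  then show "alt (tl (butlast q))"
    by (cases "butlast q") (auto simp: alt_Cons)
qed

lemma fam_appears: "w \<in> famAll \<Longrightarrow> appears_from_A w"
  unfolding famAll_def famA_def famO_def fam_oA_def fam_oO_def fam_oOo_def fam_oAx_def neg_part_def
  by (auto simp: rep_map intro: apA apO apnO apoA apnoA apoO apnoO apoOo apnoOo apoAx)

theorem theorem1:
  "{w. nontrivial w \<and> appears_from_A w} =
   {w. nontrivial w \<and> (w \<in> famAll \<or> rev w \<in> famAll)}"
proof (intro set_eqI iffI)
  fix w assume "w \<in> {w. nontrivial w \<and> (w \<in> famAll \<or> rev w \<in> famAll)}"
  then show "w \<in> {w. nontrivial w \<and> appears_from_A w}"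
    using fam_appears appears_rev by auto
next
  fix w assume "w \<in> {w. nontrivial w \<and> appears_from_A w}"
  then have nt: "nontrivial w" and ap: "appears_from_A w" by auto
  then obtain q b p where q: "q \<in> famA" "reachable (board_of q) b" "is_part p b" "p = w \<or> p = rev w"
    unfolding appears_from_A_def by blast
  obtain n where qn: "q = rep n [Wo,Bx]" using q(1) famA_def by auto
  have "G q" using alt_rep[of Wo Bx n] qn alt_G by simp
  then have "Inv (board_of q)"
    unfolding Inv_def board_of_def using blocks_map[of q "[]"] by simp
  then have "Inv b" using Inv_reach q(2) by blast
  then have "G p" using q(3) is_part_D D_blocks Inv_def by blast
  then have "G w" using q(4) G_rev by auto
  then show "w \<in> {w. nontrivial w \<and> (w \<in> famAll \<or> rev w \<in> famAll)}"
    using nt G_fam by auto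
qed

end
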